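(* Let $\tau:SU(2)\to U(H)$ be a strongly continuous unitary representation on a finite-dimensional Hilbert space $H$, and let $E_m=E_m(\tau,H)$ and $\iota_{k,m}$ be as in the context. Then $(E,\iota)$ is an $SU(2)$-subproduct system (of Hilbert spaces, i.e. over $B=\mathbb{C}$): for all $k,m$, $\iota_{k,m}$ maps $E_{k+m}$ into $E_k\otimes E_m$, and the maps $\iota_{k,m}$ are $SU(2)$-equivariant isometries satisfying the subproduct system axioms.
   Context: $\det(\tau,H)=\{\xi\in H\otimes H:(\tau(g)\otimes\tau(g))\xi=\xi\ \forall g\in SU(2)\}$. For $m\ge2$ let $K_m=\sum_{i=1}^{m-1}H^{\otimes(i-1)}\otimes\det(\tau,H)\otimes H^{\otimes(m-i-1)}\subseteq H^{\otimes m}$ and $E_m=K_m^\perp$; $E_1=H$, $E_0=\mathbb{C}$. $SU(2)$ acts on $E_m$ by the restriction of $\tau^{\otimes m}$ (which leaves $E_m$ invariant), on $E_1$ by $\tau$ and trivially on $E_0$. $\iota_{k,m}:E_{k+m}\to E_k\otimes E_m$ is induced by the canonical identification $H^{\otimes(k+m)}\cong H^{\otimes k}\otimes H^{\otimes m}$ (with $E_0\otimes E_m=E_m=E_m\otimes E_0$). A subproduct system of Hilbert spaces is a sequence $\{E_m\}_{m\in\mathbb{N}_0}$ of Hilbert spaces with $E_0=\mathbb{C}$ and isometries $\iota_{k,m}:E_{k+m}\to E_k\otimes E_m$ such that $\iota_{0,m},\iota_{m,0}$ are the canonical identifications and $(1_{E_k}\otimes\iota_{l,m})\iota_{k,l+m}=(\iota_{k,l}\otimes1_{E_m})\iota_{k+l,m}$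 for all $k,l,m$; it is an $SU(2)$-subproduct system if each $E_m$ carries a strongly continuous unitary $SU(2)$-representation (trivial on $E_0$) and all $\iota_{k,m}$ are equivariant for the diagonal actions. *)

theory Defs
  imports "HOL-Analysis.Analysis"
begin

text \<open>H is C^d, realised as functions on the alphabet {..<d}.
  H^{\<otimes>m} is realised as functions on words of length m over {..<d}
  (supported there), a two-fold tensor product of such spaces as functions on
  pairs of words, a three-fold one as functions on triples. The canonical
  identification H^{\<otimes>(k+m)} = H^{\<otimes>k} \<otimes> H^{\<otimes>m} is
  splitting a word of length k+m into its first k and last m letters.\<close>

definition words :: "nat \<Rightarrow> nat \<Rightarrow> nat list set" where
  "words d m = {w. length w = m \<and> set w \<subseteq> {..<d}}"

definition tens :: "nat \<Rightarrow> nat \<Rightarrow> (nat list \<Rightarrow> complex) set" where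
  "tens d m = {f. \<forall>w. f w \<noteq> 0 \<longrightarrow> w \<in> words d m}"

definition ip :: "'a set \<Rightarrow> ('a \<Rightarrow> complex) \<Rightarrow> ('a \<Rightarrow> complex) \<Rightarrow> complex" where
  "ip A f g = (\<Sum>x\<in>A. cnj (f x) * g x)"

definition cspan :: "('a \<Rightarrow> complex) set \<Rightarrow> ('a \<Rightarrow> complex) set" where
  "cspan S = {f. \<exists>T c. finite T \<and> T \<subseteq> S \<and> f = (\<lambda>x. \<Sum>t\<in>T. c t * t x)}"

definition csubspace :: "('a \<Rightarrow> complex) set \<Rightarrow> bool" where
  "csubspace V \<longleftrightarrow> (\<lambda>x. 0) \<in> V \<and> (\<forall>f\<in>V. \<forall>g\<in>V. \<forall>c. (\<lambda>x. c * f x + g x) \<in> V)"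

definition clinear_on :: "('a \<Rightarrow> complex) set \<Rightarrow> (('a \<Rightarrow> complex) \<Rightarrow> ('b \<Rightarrow> complex)) \<Rightarrow> bool" where
  "clinear_on V T \<longleftrightarrow> (\<forall>f\<in>V. \<forall>g\<in>V. \<forall>c.
      T (\<lambda>x. c * f x + g x) = (\<lambda>y. c * T f y + T g y))"

definition htensor :: "('a \<Rightarrow> complex) set \<Rightarrow> ('b \<Rightarrow> complex) set \<Rightarrow> ('a \<times> 'b \<Rightarrow> complex) set" where
  "htensor V W = cspan {(\<lambda>(u, v). a u * b v) | a b. a \<in> V \<and> b \<in> W}"

definition map_tensor :: "(('a \<Rightarrow> complex) \<Rightarrow> ('a \<Rightarrow> complex)) \<Rightarrow> (('b \<Rightarrow> complex) \<Rightarrow> ('b \<Rightarrow> complex))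
    \<Rightarrow> ('a \<times> 'b \<Rightarrow> complex) \<Rightarrow> ('a \<times> 'b \<Rightarrow> complex)" where
  "map_tensor A B F = (\<lambda>(u, v). A (\<lambda>u'. B (\<lambda>v'. F (u', v')) v) u)"

definition id_tensor :: "(('b \<Rightarrow> complex) \<Rightarrow> ('c \<Rightarrow> complex)) \<Rightarrow> ('a \<times> 'b \<Rightarrow> complex) \<Rightarrow> ('a \<times> 'c \<Rightarrow> complex)" where
  "id_tensor J F = (\<lambda>(u, p). J (\<lambda>y. F (u, y)) p)"

definition tensor_id :: "(('a \<Rightarrow> complex) \<Rightarrow> ('c \<Rightarrow> complex)) \<Rightarrow> ('a \<times> 'b \<Rightarrow> complex) \<Rightarrow> ('c \<times> 'b \<Rightarrow> complex)" where
  "tensor_id J F = (\<lambda>(q, w). J (\<lambda>x. F (x, w)) q)"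

definition adj2 :: "complex^2^2 \<Rightarrow> complex^2^2" where
  "adj2 U = (\<chi> i j. cnj (U $ j $ i))"

definition SU2 :: "(complex^2^2) set" where
  "SU2 = {U. adj2 U ** U = mat 1 \<and> det U = 1}"

text \<open>A strongly continuous unitary representation of SU(2) on H = C^d, given by matrices
  (only entries i,j < d are relevant).\<close>
definition unitary_rep_SU2 :: "nat \<Rightarrow> (complex^2^2 \<Rightarrow> nat \<Rightarrow> nat \<Rightarrow> complex) \<Rightarrow> bool" where
  "unitary_rep_SU2 d \<tau> \<longleftrightarrow>
     (\<forall>g\<in>SU2. \<forall>h\<in>SU2. \<forall>i<d. \<forall>j<d. \<tau> (g ** h) i j = (\<Sum>k<d. \<tau> g i k * \<tau> h k j)) \<and>
     (\<forall>i<d. \<forall>j<d. \<tau> (mat 1) i j = (if i = j then 1 else 0)) \<and>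
     (\<forall>g\<in>SU2. \<forall>i<d. \<forall>j<d. (\<Sum>k<d. cnj (\<tau> g k i) * \<tau> g k j) = (if i = j then 1 else 0)) \<and>
     (\<forall>\<xi>::nat \<Rightarrow> complex. \<forall>i<d. continuous_on SU2 (\<lambda>g. \<Sum>j<d. \<tau> g i j * \<xi> j))"

definition tensrep :: "nat \<Rightarrow> (complex^2^2 \<Rightarrow> nat \<Rightarrow> nat \<Rightarrow> complex) \<Rightarrow> nat \<Rightarrow> complex^2^2
    \<Rightarrow> (nat list \<Rightarrow> complex) \<Rightarrow> (nat list \<Rightarrow> complex)" where
  "tensrep d \<tau> m g f = (\<lambda>w. if w \<in> words d m
      then (\<Sum>v\<in>words d m. (\<Prod>i<m. \<tau> g (w ! i) (v ! i)) * f v) else 0)"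

definition tprod :: "nat \<Rightarrow> (nat list \<Rightarrow> complex) \<Rightarrow> (nat list \<Rightarrow> complex) \<Rightarrow> (nat list \<Rightarrow> complex)" where
  "tprod k a b = (\<lambda>w. a (take k w) * b (drop k w))"

definition detsp :: "nat \<Rightarrow> (complex^2^2 \<Rightarrow> nat \<Rightarrow> nat \<Rightarrow> complex) \<Rightarrow> (nat list \<Rightarrow> complex) set" where
  "detsp d \<tau> = {\<xi> \<in> tens d 2. \<forall>g\<in>SU2. tensrep d \<tau> 2 g \<xi> = \<xi>}"

definition Ksp :: "nat \<Rightarrow> (complex^2^2 \<Rightarrow> nat \<Rightarrow> nat \<Rightarrow> complex) \<Rightarrow> nat \<Rightarrow> (nat list \<Rightarrow> complex) set" where
  "Ksp d \<tau> m = cspan (\<Union>i\<in>{1..m-1}.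
      {tprod (i - 1) a (tprod 2 z b) | a z b.
         a \<in> tens d (i - 1) \<and> z \<in> detsp d \<tau> \<and> b \<in> tens d (m - i - 1)})"

text \<open>E_m = K_m^\<perp> inside H^{\<otimes>m} (for m = 0, 1 this is C, resp. H, since K_m = 0)\<close>
definition Esp :: "nat \<Rightarrow> (complex^2^2 \<Rightarrow> nat \<Rightarrow> nat \<Rightarrow> complex) \<Rightarrow> nat \<Rightarrow> (nat list \<Rightarrow> complex) set" where
  "Esp d \<tau> m = {\<xi> \<in> tens d m. \<forall>\<eta>\<in>Ksp d \<tau> m. ip (words d m) \<eta> \<xi> = 0}"

definition iota :: "nat \<Rightarrow> nat \<Rightarrow> (nat list \<Rightarrow> complex) \<Rightarrow> (nat list \<times> nat list \<Rightarrow> complex)" where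
  "iota k m \<xi> = (\<lambda>(u, v). if length u = k then \<xi> (u @ v) else 0)"

text \<open>SU(2)-subproduct system (in the model where E_m is a subspace of H^{\<otimes>m},
  represented by functions on words of length m over {..<d}), with representations \<sigma> m on E m.\<close>
definition SU2_subproduct_system :: "nat \<Rightarrow> (nat \<Rightarrow> (nat list \<Rightarrow> complex) set)
    \<Rightarrow> (nat \<Rightarrow> nat \<Rightarrow> (nat list \<Rightarrow> complex) \<Rightarrow> (nat list \<times> nat list \<Rightarrow> complex))
    \<Rightarrow> (nat \<Rightarrow> complex^2^2 \<Rightarrow> (nat list \<Rightarrow> complex) \<Rightarrow> (nat list \<Rightarrow> complex)) \<Rightarrow> bool" where
  "SU2_subproduct_system d E \<iota> \<sigma> \<longleftrightarrow>
     \<comment> \<open>Hilbert spaces, E_0 = C\<close>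
     (\<forall>m. csubspace (E m) \<and> E m \<subseteq> tens d m) \<and>
     E 0 = {(\<lambda>w. if w = [] then c else 0) | c. True} \<and>
     \<comment> \<open>isometries E_{k+m} \<rightarrow> E_k \<otimes> E_m\<close>
     (\<forall>k m. clinear_on (E (k + m)) (\<iota> k m) \<and>
        (\<forall>\<xi>\<in>E (k + m). \<iota> k m \<xi> \<in> htensor (E k) (E m)) \<and>
        (\<forall>\<xi>\<in>E (k + m). \<forall>\<eta>\<in>E (k + m).
           ip (words d k \<times> words d m) (\<iota> k m \<xi>) (\<iota> k m \<eta>) = ip (words d (k + m)) \<xi> \<eta>)) \<and>
     \<comment> \<open>\<iota>_{0,m}, \<iota>_{m,0} are the canonical identifications\<close>
     (\<forall>m. \<forall>\<xi>\<in>E m. \<iota> 0 m \<xi> = (\<lambda>(u, v). if u = [] then \<xi> v else 0)) \<and>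
     (\<forall>m. \<forall>\<xi>\<in>E m. \<iota> m 0 \<xi> = (\<lambda>(u, v). if v = [] then \<xi> u else 0)) \<and>
     \<comment> \<open>coassociativity\<close>
     (\<forall>k l m. \<forall>\<xi>\<in>E (k + l + m). \<forall>u v w.
        id_tensor (\<iota> l m) (\<iota> k (l + m) \<xi>) (u, (v, w)) =
        tensor_id (\<iota> k l) (\<iota> (k + l) m \<xi>) ((u, v), w)) \<and>
     \<comment> \<open>strongly continuous unitary representations, trivial on E_0\<close>
     (\<forall>m. \<forall>g\<in>SU2. clinear_on (E m) (\<sigma> m g) \<and> \<sigma> m g ` E m = E m \<and>
        (\<forall>\<xi>\<in>E m. \<forall>\<eta>\<in>E m. ip (words d m) (\<sigma> m g \<xi>) (\<sigma> m g \<eta>) = ip (words d m) \<xi> \<eta>)) \<and>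
     (\<forall>m. \<forall>g\<in>SU2. \<forall>h\<in>SU2. \<forall>\<xi>\<in>E m. \<sigma> m (g ** h) \<xi> = \<sigma> m g (\<sigma> m h \<xi>)) \<and>
     (\<forall>m. \<forall>\<xi>\<in>E m. \<sigma> m (mat 1) \<xi> = \<xi>) \<and>
     (\<forall>m. \<forall>\<xi>\<in>E m. \<forall>w. continuous_on SU2 (\<lambda>g. \<sigma> m g \<xi> w)) \<and>
     (\<forall>g\<in>SU2. \<forall>\<xi>\<in>E 0. \<sigma> 0 g \<xi> = \<xi>) \<and>
     \<comment> \<open>equivariance for the diagonal actions\<close>
     (\<forall>k m. \<forall>g\<in>SU2. \<forall>\<xi>\<in>E (k + m).
        \<iota> k m (\<sigma> (k + m) g \<xi>) = map_tensor (\<sigma> k g) (\<sigma> m g) (\<iota> k m \<xi>))"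

end

theory Submission
  imports Defs
begin

lemma finite_words: "finite (words d m)"
proof -
  have "words d m = {xs. set xs \<subseteq> {..<d} \<and> length xs = m}" by (auto simp: words_def)
  thus ?thesis using finite_lists_length_eq[of "{..<d}" m] by simp
qed

lemma words_split:
  assumes "x \<in> words d (k + m)"
  shows "take k x \<in> words d k" "drop k x \<in> words d m"
  using assms by (auto simp: words_def dest: in_set_takeD in_set_dropD)

lemma append_words: "u \<in> words d k \<Longrightarrow> v \<in> words d m \<Longrightarrow> u @ v \<in> words d (k + m)"
  by (auto simp: words_def)

lemma sum_words_append:
  "(\<Sum>x\<in>words d (k + m). h x) = (\<Sum>u\<in>words d k. \<Sum>v\<in>words d m. h (u @ v))"
proof -
  have inj: "inj_on (\<lambda>(u, v). u @ v) (words d k \<times> words d m)"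
    by (auto simp: inj_on_def words_def)
  have img: "(\<lambda>(u, v). u @ v) ` (words d k \<times> words d m) = words d (k + m)"
  proof
    show "(\<lambda>(u, v). u @ v) ` (words d k \<times> words d m) \<subseteq> words d (k + m)"
      by (auto simp: append_words)
    show "words d (k + m) \<subseteq> (\<lambda>(u, v). u @ v) ` (words d k \<times> words d m)"
    proof
      fix x assume "x \<in> words d (k + m)"
      then show "x \<in> (\<lambda>(u, v). u @ v) ` (words d k \<times> words d m)"
        using words_split[of x d k m] by (auto intro!: image_eqI[where x="(take k x, drop k x)"])
    qed
  qed
  have "(\<Sum>x\<in>words d (k + m). h x) = (\<Sum>p\<in>words d k \<times> words d m. h (case p of (u, v) \<Rightarrow> u @ v))"
    using sum.reindex[OF inj, of h] img by (simp add: case_prod_beta)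
  also have "\<dots> = (\<Sum>u\<in>words d k. \<Sum>v\<in>words d m. h (u @ v))"
    by (simp add: sum.cartesian_product split_def)
  finally show ?thesis .
qed

lemma prod_lessThan_add: "(\<Prod>i<k + m. f i) = (\<Prod>i<k. f i) * (\<Prod>i<m. f (k + i))"
  for f :: "nat \<Rightarrow> 'a::comm_monoid_mult"
  by (induction m) (simp_all add: mult.assoc)

lemma prod_append_split:
  assumes "length u = k" "length u' = k"
  shows "(\<Prod>i<k + m. f ((u @ v) ! i) ((u' @ v') ! i)) =
         (\<Prod>i<k. f (u ! i) (u' ! i)) * (\<Prod>i<m. f (v ! i) (v' ! i))"
  using assms by (simp add: prod_lessThan_add nth_append)

lemma words_Suc: "words d (Suc m) = (\<lambda>(j, u). j # u) ` ({..<d} \<times> words d m)"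
proof
  show "words d (Suc m) \<subseteq> (\<lambda>(j, u). j # u) ` ({..<d} \<times> words d m)"
  proof
    fix x assume "x \<in> words d (Suc m)"
    then obtain j u where "x = j # u" "j < d" "u \<in> words d m"
      by (cases x) (auto simp: words_def)
    thus "x \<in> (\<lambda>(j, u). j # u) ` ({..<d} \<times> words d m)" by force
  qed
qed (auto simp: words_def)

lemma sum_words_prod:
  "(\<Sum>u\<in>words d m. \<Prod>i<m. f i (u ! i)) = (\<Prod>i<m. \<Sum>j<d. f i j)"
  for f :: "nat \<Rightarrow> nat \<Rightarrow> 'a::comm_semiring_1"
proof (induction m arbitrary: f)
  case 0
  have "words d 0 = {[]}" by (auto simp: words_def)
  thus ?case by simp
next
  case (Suc m)
  have inj: "inj_on (\<lambda>(j, u). j # u) ({..<d} \<times> words d m)" by (auto simp: inj_on_def)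
  have "(\<Sum>u\<in>words d (Suc m). \<Prod>i<Suc m. f i (u ! i))
      = (\<Sum>p\<in>{..<d} \<times> words d m. \<Prod>i<Suc m. f i ((case p of (j, u) \<Rightarrow> j # u) ! i))"
    unfolding words_Suc by (subst sum.reindex[OF inj]) (simp add: case_prod_beta)
  also have "\<dots> = (\<Sum>j<d. \<Sum>u\<in>words d m. f 0 j * (\<Prod>i<m. f (Suc i) (u ! i)))"
    by (simp add: sum.cartesian_product prod.lessThan_Suc_shift split_def del: prod.lessThan_Suc)
  also have "\<dots> = (\<Sum>j<d. f 0 j * (\<Prod>i<m. \<Sum>j<d. f (Suc i) j))"
    using Suc.IH[of "\<lambda>i. f (Suc i)"] by (simp add: sum_distrib_left[symmetric])
  also have "\<dots> = (\<Prod>i<Suc m. \<Sum>j<d. f i j)"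
    by (simp add: prod.lessThan_Suc_shift sum_distrib_right del: prod.lessThan_Suc)
  finally show ?case .
qed

lemma prod_delta:
  assumes "length w = m" "length v = m"
  shows "(\<Prod>i<m. (if w ! i = v ! i then 1 else 0 :: 'a::comm_semiring_1)) = (if w = v then 1 else 0)"
proof (cases "w = v")
  case True thus ?thesis by simp
next
  case False
  then obtain i where "i < m" "w ! i \<noteq> v ! i" using assms nth_equalityI by metis
  thus ?thesis using False by (subst prod_zero) auto
qed

lemma tensrep_tens: "tensrep d \<tau> m g f \<in> tens d m"
  by (auto simp: tens_def tensrep_def)

lemma rep_mult: "unitary_rep_SU2 d \<tau> \<Longrightarrow> g \<in> SU2 \<Longrightarrow> h \<in> SU2 \<Longrightarrow> i < d \<Longrightarrow> j < d \<Longrightarrow>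
   \<tau> (g ** h) i j = (\<Sum>k<d. \<tau> g i k * \<tau> h k j)"
  by (simp add: unitary_rep_SU2_def)

lemma rep_one: "unitary_rep_SU2 d \<tau> \<Longrightarrow> i < d \<Longrightarrow> j < d \<Longrightarrow> \<tau> (mat 1) i j = (if i = j then 1 else 0)"
  by (simp add: unitary_rep_SU2_def)

lemma rep_unit: "unitary_rep_SU2 d \<tau> \<Longrightarrow> g \<in> SU2 \<Longrightarrow> i < d \<Longrightarrow> j < d \<Longrightarrow>
   (\<Sum>k<d. cnj (\<tau> g k i) * \<tau> g k j) = (if i = j then 1 else 0)"
  by (simp add: unitary_rep_SU2_def)

lemma words_nth: "w \<in> words d m \<Longrightarrow> i < m \<Longrightarrow> w ! i < d"
  unfolding words_def using nth_mem by fastforce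

lemma words_len: "w \<in> words d m \<Longrightarrow> length w = m"
  by (auto simp: words_def)

lemma tensrep_mult:
  assumes U: "unitary_rep_SU2 d \<tau>" and g: "g \<in> SU2" and h: "h \<in> SU2"
  shows "tensrep d \<tau> m (g ** h) f = tensrep d \<tau> m g (tensrep d \<tau> m h f)"
proof
  fix w
  show "tensrep d \<tau> m (g ** h) f w = tensrep d \<tau> m g (tensrep d \<tau> m h f) w"
  proof (cases "w \<in> words d m")
    case False thus ?thesis by (simp add: tensrep_def)
  next
    case True
    have P: "(\<Prod>i<m. \<tau> (g ** h) (w ! i) (v ! i)) =
        (\<Sum>u\<in>words d m. (\<Prod>i<m. \<tau> g (w ! i) (u ! i)) * (\<Prod>i<m. \<tau> h (u ! i) (v ! i)))"
      if v: "v \<in> words d m" for v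
    proof -
      have "(\<Prod>i<m. \<tau> (g ** h) (w ! i) (v ! i)) = (\<Prod>i<m. \<Sum>k<d. \<tau> g (w ! i) k * \<tau> h k (v ! i))"
        using True v by (intro prod.cong refl rep_mult[OF U g h]) (auto intro: words_nth)
      also have "\<dots> = (\<Sum>u\<in>words d m. \<Prod>i<m. \<tau> g (w ! i) (u ! i) * \<tau> h (u ! i) (v ! i))"
        by (rule sum_words_prod[symmetric])
      finally show ?thesis by (simp add: prod.distrib)
    qed
    have "tensrep d \<tau> m (g ** h) f w = (\<Sum>v\<in>words d m. (\<Prod>i<m. \<tau> (g ** h) (w ! i) (v ! i)) * f v)"
      using True by (simp add: tensrep_def)
    also have "\<dots> = (\<Sum>v\<in>words d m. \<Sum>u\<in>words d m. (\<Prod>i<m. \<tau> g (w ! i) (u ! i)) * ((\<Prod>i<m. \<tau> h (u ! i) (v ! i)) * f v))"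
      by (intro sum.cong refl) (simp add: P sum_distrib_right mult.assoc)
    also have "\<dots> = (\<Sum>u\<in>words d m. (\<Prod>i<m. \<tau> g (w ! i) (u ! i)) * (\<Sum>v\<in>words d m. (\<Prod>i<m. \<tau> h (u ! i) (v ! i)) * f v))"
      by (subst sum.swap) (simp add: sum_distrib_left)
    also have "\<dots> = tensrep d \<tau> m g (tensrep d \<tau> m h f) w"
      using True by (simp add: tensrep_def)
    finally show ?thesis .
  qed
qed

lemma tensrep_one:
  assumes U: "unitary_rep_SU2 d \<tau>" and f: "f \<in> tens d m"
  shows "tensrep d \<tau> m (mat 1) f = f"
proof
  fix w
  show "tensrep d \<tau> m (mat 1) f w = f w"
  proof (cases "w \<in> words d m")
    case False thus ?thesis using f by (auto simp: tensrep_def tens_def)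
  next
    case True
    have "(\<Sum>v\<in>words d m. (\<Prod>i<m. \<tau> (mat 1) (w ! i) (v ! i)) * f v)
        = (\<Sum>v\<in>words d m. (if w = v then 1 else 0) * f v)"
    proof (intro sum.cong refl)
      fix v assume v: "v \<in> words d m"
      have "(\<Prod>i<m. \<tau> (mat 1) (w ! i) (v ! i)) = (\<Prod>i<m. (if w ! i = v ! i then 1 else 0))"
        using True v by (intro prod.cong refl rep_one[OF U]) (auto intro: words_nth)
      also have "\<dots> = (if w = v then 1 else 0)"
        using True v by (intro prod_delta) (auto simp: words_len)
      finally show "(\<Prod>i<m. \<tau> (mat 1) (w ! i) (v ! i)) * f v = (if w = v then 1 else 0) * f v" by simp
    qed
    also have "\<dots> = (\<Sum>v\<in>words d m. if w = v then f v else 0)" by (intro sum.cong) auto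
    also have "\<dots> = f w" using True finite_words by simp
    finally show ?thesis using True by (simp add: tensrep_def)
  qed
qed

lemma cnj_rearr: "cnj (a * b) * (c * e) = cnj b * e * (cnj a * c)" for a b c e :: complex
  by (simp only: complex_cnj_mult mult.assoc mult.commute mult.left_commute)

lemma tensrep_unitary:
  assumes U: "unitary_rep_SU2 d \<tau>" and g: "g \<in> SU2"
  shows "ip (words d m) (tensrep d \<tau> m g f) (tensrep d \<tau> m g h) = ip (words d m) f h"
proof -
  let ?W = "words d m"
  let ?P = "\<lambda>w v. \<Prod>i<m. \<tau> g (w ! i) (v ! i)"
  have D: "(\<Sum>w\<in>?W. cnj (?P w v) * ?P w v') = (if v = v' then 1 else 0)"
    if v: "v \<in> ?W" and v': "v' \<in> ?W" for v v'
  proof -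
    have "(\<Sum>w\<in>?W. cnj (?P w v) * ?P w v') = (\<Sum>w\<in>?W. \<Prod>i<m. cnj (\<tau> g (w ! i) (v ! i)) * \<tau> g (w ! i) (v' ! i))"
      by (simp add: prod.distrib)
    also have "\<dots> = (\<Prod>i<m. \<Sum>k<d. cnj (\<tau> g k (v ! i)) * \<tau> g k (v' ! i))"
      by (rule sum_words_prod)
    also have "\<dots> = (\<Prod>i<m. (if v ! i = v' ! i then 1 else 0))"
      using v v' by (intro prod.cong refl rep_unit[OF U g]) (auto intro: words_nth)
    also have "\<dots> = (if v = v' then 1 else 0)"
      using v v' by (intro prod_delta) (auto simp: words_len)
    finally show ?thesis .
  qed
  have "ip ?W (tensrep d \<tau> m g f) (tensrep d \<tau> m g h)
      = (\<Sum>w\<in>?W. cnj (\<Sum>v\<in>?W. ?P w v * f v) * (\<Sum>v'\<in>?W. ?P w v' * h v'))"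
    by (simp add: ip_def tensrep_def)
  also have "\<dots> = (\<Sum>w\<in>?W. \<Sum>v\<in>?W. \<Sum>v'\<in>?W. cnj (f v) * h v' * (cnj (?P w v) * ?P w v'))"
  proof (intro sum.cong refl)
    fix w
    have "cnj (\<Sum>v\<in>?W. ?P w v * f v) * (\<Sum>v'\<in>?W. ?P w v' * h v')
        = (\<Sum>v\<in>?W. cnj (?P w v * f v)) * (\<Sum>v'\<in>?W. ?P w v' * h v')"
      by (simp only: cnj_sum)
    also have "\<dots> = (\<Sum>v\<in>?W. \<Sum>v'\<in>?W. cnj (?P w v * f v) * (?P w v' * h v'))"
      by (rule sum_product)
    also have "\<dots> = (\<Sum>v\<in>?W. \<Sum>v'\<in>?W. cnj (f v) * h v' * (cnj (?P w v) * ?P w v'))"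
      by (simp only: cnj_rearr)
    finally show "cnj (\<Sum>v\<in>?W. ?P w v * f v) * (\<Sum>v'\<in>?W. ?P w v' * h v')
        = (\<Sum>v\<in>?W. \<Sum>v'\<in>?W. cnj (f v) * h v' * (cnj (?P w v) * ?P w v'))" .
  qed
  also have "\<dots> = (\<Sum>v\<in>?W. \<Sum>v'\<in>?W. cnj (f v) * h v' * (\<Sum>w\<in>?W. cnj (?P w v) * ?P w v'))"
  proof -
    have "(\<Sum>w\<in>?W. \<Sum>v\<in>?W. \<Sum>v'\<in>?W. cnj (f v) * h v' * (cnj (?P w v) * ?P w v'))
      = (\<Sum>v\<in>?W. \<Sum>w\<in>?W. \<Sum>v'\<in>?W. cnj (f v) * h v' * (cnj (?P w v) * ?P w v'))"
      by (rule sum.swap)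
    also have "\<dots> = (\<Sum>v\<in>?W. \<Sum>v'\<in>?W. \<Sum>w\<in>?W. cnj (f v) * h v' * (cnj (?P w v) * ?P w v'))"
      by (rule sum.cong[OF refl], rule sum.swap)
    finally show ?thesis by (simp only: sum_distrib_left)
  qed
  also have "\<dots> = (\<Sum>v\<in>?W. \<Sum>v'\<in>?W. cnj (f v) * h v' * (if v = v' then 1 else 0))"
    by (rule sum.cong[OF refl], rule sum.cong[OF refl], simp only: D)
  also have "\<dots> = ip ?W f h"
    by (simp add: ip_def if_distrib finite_words cong: if_cong)
  finally show ?thesis .
qed

lemma tensrep_tprod:
  "tensrep d \<tau> (k + m) g (tprod k a b) = tprod k (tensrep d \<tau> k g a) (tensrep d \<tau> m g b)"
proof
  fix w
  show "tensrep d \<tau> (k + m) g (tprod k a b) w = tprod k (tensrep d \<tau> k g a) (tensrep d \<tau> m g b) w"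
  proof (cases "w \<in> words d (k + m)")
    case False
    hence "take k w \<notin> words d k \<or> drop k w \<notin> words d m"
      using append_words[of "take k w" d k "drop k w" m] by auto
    thus ?thesis using False by (auto simp: tensrep_def tprod_def)
  next
    case True
    define u v where "u = take k w" and "v = drop k w"
    have u: "u \<in> words d k" and v: "v \<in> words d m" using words_split[OF True] u_def v_def by auto
    have w: "w = u @ v" by (simp add: u_def v_def)
    have lu: "length u = k" using u by (simp add: words_len)
    have "tensrep d \<tau> (k + m) g (tprod k a b) w
       = (\<Sum>u'\<in>words d k. \<Sum>v'\<in>words d m. (\<Prod>i<k + m. \<tau> g ((u @ v) ! i) ((u' @ v') ! i)) * (a u' * b v'))"
      using True lu by (simp add: tensrep_def tprod_def sum_words_append w words_len cong: sum.cong)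
    also have "\<dots> = (\<Sum>u'\<in>words d k. \<Sum>v'\<in>words d m. ((\<Prod>i<k. \<tau> g (u ! i) (u' ! i)) * a u') * ((\<Prod>i<m. \<tau> g (v ! i) (v' ! i)) * b v'))"
      using lu by (intro sum.cong refl) (simp add: prod_append_split words_len mult_ac)
    also have "\<dots> = tprod k (tensrep d \<tau> k g a) (tensrep d \<tau> m g b) w"
      using u v lu by (simp add: tensrep_def tprod_def w sum_product)
    finally show ?thesis .
  qed
qed

lemma tensrep_lin: "tensrep d \<tau> m g (\<lambda>x. c * f x + h x) = (\<lambda>y. c * tensrep d \<tau> m g f y + tensrep d \<tau> m g h y)"
  by (auto simp: tensrep_def sum_distrib_left sum.distrib algebra_simps)

lemma tensrep_sum: "tensrep d \<tau> m g (\<lambda>x. \<Sum>t\<in>T. c t * F t x) = (\<lambda>x. \<Sum>t\<in>T. c t * tensrep d \<tau> m g (F t) x)"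
proof
  fix x
  show "tensrep d \<tau> m g (\<lambda>x. \<Sum>t\<in>T. c t * F t x) x = (\<Sum>t\<in>T. c t * tensrep d \<tau> m g (F t) x)"
  proof (cases "x \<in> words d m")
    case True
    have "(\<Sum>v\<in>words d m. (\<Prod>i<m. \<tau> g (x ! i) (v ! i)) * (\<Sum>t\<in>T. c t * F t v))
        = (\<Sum>v\<in>words d m. \<Sum>t\<in>T. c t * ((\<Prod>i<m. \<tau> g (x ! i) (v ! i)) * F t v))"
      by (simp only: sum_distrib_left mult.left_commute)
    also have "\<dots> = (\<Sum>t\<in>T. \<Sum>v\<in>words d m. c t * ((\<Prod>i<m. \<tau> g (x ! i) (v ! i)) * F t v))"
      by (rule sum.swap)
    also have "\<dots> = (\<Sum>t\<in>T. c t * (\<Sum>v\<in>words d m. (\<Prod>i<m. \<tau> g (x ! i) (v ! i)) * F t v))"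
      by (simp only: sum_distrib_left)
    finally show ?thesis using True by (simp add: tensrep_def)
  qed (simp add: tensrep_def)
qed

lemma csub_zero: "csubspace V \<Longrightarrow> (\<lambda>x. 0) \<in> V" by (simp add: csubspace_def)
lemma csub_lin: "csubspace V \<Longrightarrow> f \<in> V \<Longrightarrow> g \<in> V \<Longrightarrow> (\<lambda>x. c * f x + g x) \<in> V"
  by (simp add: csubspace_def)

lemma csub_scale: "csubspace V \<Longrightarrow> f \<in> V \<Longrightarrow> (\<lambda>x. c * f x) \<in> V"
  using csub_lin[of V f "\<lambda>x. 0" c] csub_zero[of V] by simp

lemma csub_sum:
  assumes V: "csubspace V" and T: "finite T" and F: "\<forall>t\<in>T. F t \<in> V"
  shows "(\<lambda>x. \<Sum>t\<in>T. c t * F t x) \<in> V"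
  using T F
proof (induction T rule: finite_induct)
  case empty thus ?case using csub_zero[OF V] by simp
next
  case (insert t T)
  hence "(\<lambda>x. c t * F t x + (\<Sum>t\<in>T. c t * F t x)) \<in> V"
    using csub_lin[OF V] by simp
  thus ?case using insert by simp
qed

lemma cspan_csub: "csubspace (cspan S)"
  unfolding csubspace_def
proof (intro conjI ballI allI)
  show "(\<lambda>x. 0) \<in> cspan S" unfolding cspan_def by (auto intro!: exI[of _ "{}"])
next
  fix f g c assume f: "f \<in> cspan S" and g: "g \<in> cspan S"
  obtain T1 c1 where T1: "finite T1" "T1 \<subseteq> S" "f = (\<lambda>x. \<Sum>t\<in>T1. c1 t * t x)" using f by (auto simp: cspan_def)
  obtain T2 c2 where T2: "finite T2" "T2 \<subseteq> S" "g = (\<lambda>x. \<Sum>t\<in>T2. c2 t * t x)" using g by (auto simp: cspan_def)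
  define T where "T = T1 \<union> T2"
  define e where "e t = c * (if t \<in> T1 then c1 t else 0) + (if t \<in> T2 then c2 t else 0)" for t
  have fT: "finite T" using T1 T2 by (simp add: T_def)
  have "(\<lambda>x. c * f x + g x) = (\<lambda>x. \<Sum>t\<in>T. e t * t x)"
  proof
    fix x
    have 1: "(\<Sum>t\<in>T. (if t \<in> T1 then c1 t * t x else 0)) = (\<Sum>t\<in>T1. c1 t * t x)"
      using sum.inter_restrict[OF fT, of "\<lambda>t. c1 t * t x" T1] by (simp add: T_def Int_absorb1)
    have 2: "(\<Sum>t\<in>T. (if t \<in> T2 then c2 t * t x else 0)) = (\<Sum>t\<in>T2. c2 t * t x)"
      using sum.inter_restrict[OF fT, of "\<lambda>t. c2 t * t x" T2] by (simp add: T_def Int_absorb1)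
    have "(\<Sum>t\<in>T. e t * t x) = c * (\<Sum>t\<in>T. (if t \<in> T1 then c1 t * t x else 0)) + (\<Sum>t\<in>T. (if t \<in> T2 then c2 t * t x else 0))"
    proof -
      have "(\<Sum>t\<in>T. e t * t x) = (\<Sum>t\<in>T. c * (if t \<in> T1 then c1 t * t x else 0) + (if t \<in> T2 then c2 t * t x else 0))"
        by (intro sum.cong refl) (auto simp: e_def distrib_right)
      thus ?thesis by (simp only: sum.distrib sum_distrib_left)
    qed
    thus "c * f x + g x = (\<Sum>t\<in>T. e t * t x)" using 1 2 T1 T2 by simp
  qed
  moreover have "T \<subseteq> S" using T1 T2 by (auto simp: T_def)
  ultimately show "(\<lambda>x. c * f x + g x) \<in> cspan S" using fT unfolding cspan_def by blast
qed

lemma cspan_base: "t \<in> S \<Longrightarrow> t \<in> cspan S"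
  unfolding cspan_def by (auto intro!: exI[of _ "{t}"] exI[of _ "\<lambda>_. 1"])

lemma cspan_min: assumes "csubspace V" "S \<subseteq> V" shows "cspan S \<subseteq> V"
proof
  fix f assume "f \<in> cspan S"
  then obtain T c where "finite T" "T \<subseteq> S" "f = (\<lambda>x. \<Sum>t\<in>T. c t * t x)" by (auto simp: cspan_def)
  thus "f \<in> V" using csub_sum[OF assms(1), of T "\<lambda>t. t" c] assms(2) by auto
qed

lemma cspan_mono: "S \<subseteq> S' \<Longrightarrow> cspan S \<subseteq> cspan S'"
proof -
  assume "S \<subseteq> S'"
  moreover have "S' \<subseteq> cspan S'" using cspan_base by blast
  ultimately show ?thesis using cspan_min[OF cspan_csub, of S S'] by blast
qed

lemma cspan_image:
  assumes "csubspace V" and "\<forall>t\<in>S. \<Phi> t \<in> V"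
    and "\<And>T c. \<Phi> (\<lambda>x. \<Sum>t\<in>T. c t * t x) = (\<lambda>x. \<Sum>t\<in>T. c t * \<Phi> t x)"
    and "f \<in> cspan S"
  shows "\<Phi> f \<in> V"
proof -
  obtain T c where T: "finite T" "T \<subseteq> S" "f = (\<lambda>x. \<Sum>t\<in>T. c t * t x)" using assms(4) by (auto simp: cspan_def)
  thus ?thesis using assms(3)[of c T] csub_sum[OF assms(1) T(1), of \<Phi> c] assms(2) by auto
qed

lemma tens_csub: "csubspace (tens d m)"
  unfolding csubspace_def
proof (intro conjI ballI allI)
  fix f g and c :: complex assume f: "f \<in> tens d m" and g: "g \<in> tens d m"
  show "(\<lambda>x. c * f x + g x) \<in> tens d m"
    unfolding tens_def
  proof (intro CollectI allI impI)
    fix w assume "c * f w + g w \<noteq> 0"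
    hence "f w \<noteq> 0 \<or> g w \<noteq> 0" by auto
    thus "w \<in> words d m" using f g by (auto simp: tens_def)
  qed
qed (simp add: tens_def)

lemma tprod_tens: "a \<in> tens d k \<Longrightarrow> b \<in> tens d m \<Longrightarrow> tprod k a b \<in> tens d (k + m)"
  unfolding tens_def tprod_def
proof (clarsimp)
  fix w assume a: "\<forall>w. a w \<noteq> 0 \<longrightarrow> w \<in> words d k" and b: "\<forall>w. b w \<noteq> 0 \<longrightarrow> w \<in> words d m"
    and "a (take k w) \<noteq> 0" "b (drop k w) \<noteq> 0"
  hence "take k w \<in> words d k" "drop k w \<in> words d m" by auto
  thus "w \<in> words d (k + m)" using append_words[of "take k w" d k "drop k w" m] by simp
qed

definition dl :: "nat list \<Rightarrow> nat list \<Rightarrow> complex" where "dl u = (\<lambda>x. if x = u then 1 else 0)"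

lemma dl_tens: "u \<in> words d k \<Longrightarrow> dl u \<in> tens d k" by (auto simp: dl_def tens_def)

definition KG :: "nat \<Rightarrow> (complex^2^2 \<Rightarrow> nat \<Rightarrow> nat \<Rightarrow> complex) \<Rightarrow> nat \<Rightarrow> (nat list \<Rightarrow> complex) set" where
  "KG d \<tau> m = (\<Union>i\<in>{1..m-1}.
      {tprod (i - 1) a (tprod 2 z b) | a z b.
         a \<in> tens d (i - 1) \<and> z \<in> detsp d \<tau> \<and> b \<in> tens d (m - i - 1)})"

lemma Ksp_KG: "Ksp d \<tau> m = cspan (KG d \<tau> m)" by (simp add: Ksp_def KG_def)

lemma KG_tens: "KG d \<tau> m \<subseteq> tens d m"
proof
  fix t assume "t \<in> KG d \<tau> m"
  then obtain i a z b where i: "1 \<le> i" "i \<le> m - 1" and t: "t = tprod (i - 1) a (tprod 2 z b)"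
    and a: "a \<in> tens d (i - 1)" and z: "z \<in> detsp d \<tau>" and b: "b \<in> tens d (m - i - 1)"
    by (auto simp: KG_def)
  have "z \<in> tens d 2" using z by (simp add: detsp_def)
  hence mem: "t \<in> tens d ((i - 1) + (2 + (m - i - 1)))" unfolding t using a b by (intro tprod_tens)
  have eq: "(i - 1) + (2 + (m - i - 1)) = m" using i by simp
  from mem show "t \<in> tens d m" by (simp only: eq)
qed

lemma Ksp_tens: "Ksp d \<tau> m \<subseteq> tens d m"
  unfolding Ksp_KG by (rule cspan_min[OF tens_csub KG_tens])

lemma tprod_sum_left: "tprod k (\<lambda>x. \<Sum>t\<in>T. c t * t x) b = (\<lambda>x. \<Sum>t\<in>T. c t * tprod k t b x)"
  by (rule ext) (simp add: tprod_def sum_distrib_right mult.assoc)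

lemma tprod_sum_right: "tprod k a (\<lambda>x. \<Sum>t\<in>T. c t * t x) = (\<lambda>x. \<Sum>t\<in>T. c t * tprod k a t x)"
  by (rule ext) (simp add: tprod_def sum_distrib_left mult.left_commute)

lemma KG_right:
  assumes t: "t \<in> KG d \<tau> k" and v: "v \<in> words d m"
  shows "tprod k t (dl v) \<in> KG d \<tau> (k + m)"
proof -
  obtain i a z b where i: "1 \<le> i" "i \<le> k - 1" and t: "t = tprod (i - 1) a (tprod 2 z b)"
    and a: "a \<in> tens d (i - 1)" and z: "z \<in> detsp d \<tau>" and b: "b \<in> tens d (k - i - 1)"
    using t by (auto simp: KG_def)
  have b': "tprod (k - i - 1) b (dl v) \<in> tens d (k + m - i - 1)"
    using tprod_tens[OF b dl_tens[OF v]] i by (simp add: add.commute)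
  have eq: "tprod k t (dl v) = tprod (i - 1) a (tprod 2 z (tprod (k - i - 1) b (dl v)))"
  proof
    fix w :: "nat list"
    have "i - 1 \<le> k" using i by arith
    hence 1: "take (i - 1) (take k w) = take (i - 1) w" by (simp add: min_def)
    have "2 \<le> k - (i - 1)" using i by arith
    hence 2: "take 2 (drop (i - 1) (take k w)) = take 2 (drop (i - 1) w)"
      by (simp add: drop_take min_def)
    have 3: "drop 2 (drop (i - 1) (take k w)) = take (k - i - 1) (drop 2 (drop (i - 1) w))"
      using i by (simp add: drop_take)
    have 4: "drop (k - i - 1) (drop 2 (drop (i - 1) w)) = drop k w"
      using i by simp
    show "tprod k t (dl v) w = tprod (i - 1) a (tprod 2 z (tprod (k - i - 1) b (dl v))) w"
      unfolding t tprod_def using 1 2 3 4 by (simp add: mult_ac)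
  qed
  have "1 \<le> i" "i \<le> k + m - 1" using i by auto
  moreover have "k + m - i - 1 = k + m - i - 1" ..
  ultimately show ?thesis unfolding eq KG_def
  proof (intro UN_I[of i])
    show "i \<in> {1..k + m - 1}" using i by auto
    show "tprod (i - 1) a (tprod 2 z (tprod (k - i - 1) b (dl v))) \<in> {tprod (i - 1) a (tprod 2 z b) | a z b.
         a \<in> tens d (i - 1) \<and> z \<in> detsp d \<tau> \<and> b \<in> tens d (k + m - i - 1)}"
      using a z b' by blast
  qed
qed

lemma KG_left:
  assumes t: "t \<in> KG d \<tau> m" and u: "u \<in> words d k"
  shows "tprod k (dl u) t \<in> KG d \<tau> (k + m)"
proof -
  obtain i a z b where i: "1 \<le> i" "i \<le> m - 1" and t: "t = tprod (i - 1) a (tprod 2 z b)"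
    and a: "a \<in> tens d (i - 1)" and z: "z \<in> detsp d \<tau>" and b: "b \<in> tens d (m - i - 1)"
    using t by (auto simp: KG_def)
  have a': "tprod k (dl u) a \<in> tens d (k + i - 1)"
    using tprod_tens[OF dl_tens[OF u] a] i by simp
  have eq: "tprod k (dl u) t = tprod (k + i - 1) (tprod k (dl u) a) (tprod 2 z b)"
  proof
    fix w :: "nat list"
    have "k \<le> k + i - 1" using i by arith
    hence 1: "take k (take (k + i - 1) w) = take k w" by (simp add: min_def)
    have 2: "drop k (take (k + i - 1) w) = take (i - 1) (drop k w)"
      using i by (simp add: drop_take)
    have 3: "drop (i - 1) (drop k w) = drop (k + i - 1) w"
      using i by (simp add: add.commute)
    show "tprod k (dl u) t w = tprod (k + i - 1) (tprod k (dl u) a) (tprod 2 z b) w"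
      unfolding t tprod_def using 1 2 3 by (simp add: mult_ac)
  qed
  have e: "k + m - (k + i) - 1 = m - i - 1" by simp
  show ?thesis unfolding eq KG_def
  proof (rule UN_I[of "k + i"])
    show "k + i \<in> {1..k + m - 1}" using i by auto
    show "tprod (k + i - 1) (tprod k (dl u) a) (tprod 2 z b) \<in> {tprod (k + i - 1) a (tprod 2 z b) | a z b.
         a \<in> tens d (k + i - 1) \<and> z \<in> detsp d \<tau> \<and> b \<in> tens d (k + m - (k + i) - 1)}"
      unfolding e using a' z b by blast
  qed
qed

lemma Ksp_right: assumes "\<eta> \<in> Ksp d \<tau> k" "v \<in> words d m" shows "tprod k \<eta> (dl v) \<in> Ksp d \<tau> (k + m)"
  unfolding Ksp_KG
proof (rule cspan_image[OF cspan_csub, where \<Phi> = "\<lambda>f. tprod k f (dl v)"])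
  show "\<forall>t\<in>KG d \<tau> k. tprod k t (dl v) \<in> cspan (KG d \<tau> (k + m))"
    using assms(2) by (auto intro!: cspan_base KG_right)
  show "\<eta> \<in> cspan (KG d \<tau> k)" using assms(1) by (simp add: Ksp_KG)
qed (rule tprod_sum_left)

lemma Ksp_left: assumes "\<eta> \<in> Ksp d \<tau> m" "u \<in> words d k" shows "tprod k (dl u) \<eta> \<in> Ksp d \<tau> (k + m)"
  unfolding Ksp_KG
proof (rule cspan_image[OF cspan_csub, where \<Phi> = "\<lambda>f. tprod k (dl u) f"])
  show "\<forall>t\<in>KG d \<tau> m. tprod k (dl u) t \<in> cspan (KG d \<tau> (k + m))"
    using assms(2) by (auto intro!: cspan_base KG_left)
  show "\<eta> \<in> cspan (KG d \<tau> m)" using assms(1) by (simp add: Ksp_KG)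
qed (rule tprod_sum_right)

lemma tensor_split:
  fixes F :: "'a \<times> 'b \<Rightarrow> complex" and V :: "('a \<Rightarrow> complex) set" and W :: "('b \<Rightarrow> complex) set"
  assumes "finite A" "csubspace V" "csubspace W" "\<forall>f\<in>V. \<forall>a. a \<notin> A \<longrightarrow> f a = 0"
    "\<forall>b. (\<lambda>a. F (a, b)) \<in> V" "\<forall>a. (\<lambda>b. F (a, b)) \<in> W"
  shows "F \<in> htensor V W"
  using assms
proof (induction A arbitrary: V F rule: finite_induct)
  case empty
  have "F = (\<lambda>x. 0)"
  proof
    fix p :: "'a \<times> 'b"
    obtain a b where p: "p = (a, b)" by (cases p)
    have col: "(\<lambda>a. F (a, b)) \<in> V" using empty.prems(4) by blast
    have z: "\<And>f. f \<in> V \<Longrightarrow> f a = 0" using empty.prems(3) by simp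
    from z[OF col] show "F p = 0" using p by simp
  qed
  thus ?case unfolding htensor_def using csub_zero[OF cspan_csub] by simp
next
  case (insert a0 A V F)
  show ?case
  proof (cases "\<exists>e\<in>V. e a0 \<noteq> 0")
    case False
    have "\<forall>f\<in>V. \<forall>a. a \<notin> A \<longrightarrow> f a = 0"
    proof (intro ballI allI impI)
      fix f a assume f: "f \<in> V" and a: "a \<notin> A"
      show "f a = 0"
      proof (cases "a = a0")
        case True thus ?thesis using False f by auto
      next
        case False thus ?thesis using insert.prems(3) f a by auto
      qed
    qed
    thus ?thesis using insert.IH[of V F] insert.prems by blast
  next
    case True
    then obtain e0 where e0: "e0 \<in> V" "e0 a0 \<noteq> 0" by blast
    define e where "e = (\<lambda>x. (1 / e0 a0) * e0 x)"
    have eV: "e \<in> V" unfolding e_def by (rule csub_scale[OF insert.prems(1) e0(1)])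
    have ea0: "e a0 = 1" using e0(2) by (simp add: e_def)
    define V' where "V' = {f \<in> V. f a0 = 0}"
    have V': "csubspace V'" using insert.prems(1) unfolding V'_def csubspace_def by auto
    have V'0: "\<forall>f\<in>V'. \<forall>a. a \<notin> A \<longrightarrow> f a = 0"
      using insert.prems(3) unfolding V'_def by auto
    define r where "r = (\<lambda>b. F (a0, b))"
    have rW: "r \<in> W" using insert.prems(5) by (simp add: r_def)
    define G where "G = (\<lambda>p. (- 1) * (\<lambda>(u, v). e u * r v) p + F p)"
    have Gc: "\<forall>b. (\<lambda>a. G (a, b)) \<in> V'"
    proof
      fix b
      have "(\<lambda>a. (- r b) * e a + F (a, b)) \<in> V"
        by (rule csub_lin[OF insert.prems(1) eV insert.prems(4)[rule_format, of b]])
      moreover have "(\<lambda>a. G (a, b)) = (\<lambda>a. (- r b) * e a + F (a, b))" by (auto simp: G_def)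
      moreover have "G (a0, b) = 0" by (simp add: G_def ea0 r_def)
      ultimately show "(\<lambda>a. G (a, b)) \<in> V'" by (simp add: V'_def ea0 r_def)
    qed
    have Gr: "\<forall>a. (\<lambda>b. G (a, b)) \<in> W"
    proof
      fix a
      have "(\<lambda>b. (- e a) * r b + F (a, b)) \<in> W"
        by (rule csub_lin[OF insert.prems(2) rW insert.prems(5)[rule_format, of a]])
      moreover have "(\<lambda>b. G (a, b)) = (\<lambda>b. (- e a) * r b + F (a, b))" by (auto simp: G_def)
      ultimately show "(\<lambda>b. G (a, b)) \<in> W" by simp
    qed
    have "G \<in> htensor V' W" using insert.IH[OF V' insert.prems(2) V'0 Gc Gr] .
    moreover have "htensor V' W \<subseteq> htensor V W"
      unfolding htensor_def by (rule cspan_mono) (auto simp: V'_def)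
    ultimately have G: "G \<in> htensor V W" by blast
    have er: "(\<lambda>(u, v). e u * r v) \<in> htensor V W"
      unfolding htensor_def using eV rW by (intro cspan_base) blast
    have "(\<lambda>x. 1 * G x + (\<lambda>(u, v). e u * r v) x) \<in> htensor V W"
      unfolding htensor_def by (rule csub_lin[OF cspan_csub G[unfolded htensor_def] er[unfolded htensor_def]])
    moreover have "(\<lambda>x. 1 * G x + (\<lambda>(u, v). e u * r v) x) = F" by (auto simp: G_def)
    ultimately show ?thesis by simp
  qed
qed

lemma ip_tprod_dl_right:
  assumes v: "v \<in> words d m"
  shows "ip (words d (k + m)) (tprod k \<eta> (dl v)) \<xi> = (\<Sum>u\<in>words d k. cnj (\<eta> u) * \<xi> (u @ v))"
proof -
  have "ip (words d (k + m)) (tprod k \<eta> (dl v)) \<xi>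
      = (\<Sum>u\<in>words d k. \<Sum>v'\<in>words d m. cnj (\<eta> (take k (u @ v')) * dl v (drop k (u @ v'))) * \<xi> (u @ v'))"
    by (simp add: ip_def tprod_def sum_words_append)
  also have "\<dots> = (\<Sum>u\<in>words d k. \<Sum>v'\<in>words d m. if v' = v then cnj (\<eta> u) * \<xi> (u @ v') else 0)"
    by (intro sum.cong refl) (auto simp: words_len dl_def)
  also have "\<dots> = (\<Sum>u\<in>words d k. cnj (\<eta> u) * \<xi> (u @ v))"
    using v finite_words by simp
  finally show ?thesis .
qed

lemma ip_tprod_dl_left:
  assumes u: "u \<in> words d k"
  shows "ip (words d (k + m)) (tprod k (dl u) \<eta>) \<xi> = (\<Sum>v\<in>words d m. cnj (\<eta> v) * \<xi> (u @ v))"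
proof -
  have "ip (words d (k + m)) (tprod k (dl u) \<eta>) \<xi>
      = (\<Sum>u'\<in>words d k. \<Sum>v\<in>words d m. cnj (dl u (take k (u' @ v)) * \<eta> (drop k (u' @ v))) * \<xi> (u' @ v))"
    by (simp add: ip_def tprod_def sum_words_append)
  also have "\<dots> = (\<Sum>u'\<in>words d k. if u' = u then (\<Sum>v\<in>words d m. cnj (\<eta> v) * \<xi> (u' @ v)) else 0)"
    by (intro sum.cong refl) (auto simp: words_len dl_def)
  also have "\<dots> = (\<Sum>v\<in>words d m. cnj (\<eta> v) * \<xi> (u @ v))"
    using u finite_words by simp
  finally show ?thesis .
qed

lemma Esp_tens: "Esp d \<tau> m \<subseteq> tens d m" by (auto simp: Esp_def)

lemma tens_zero: "f \<in> tens d m \<Longrightarrow> w \<notin> words d m \<Longrightarrow> f w = 0"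
  by (auto simp: tens_def)

lemma col_E:
  assumes \<xi>: "\<xi> \<in> Esp d \<tau> (k + m)"
  shows "(\<lambda>u. iota k m \<xi> (u, v)) \<in> Esp d \<tau> k"
proof -
  have \<xi>t: "\<xi> \<in> tens d (k + m)" using \<xi> Esp_tens by blast
  have t: "(\<lambda>u. iota k m \<xi> (u, v)) \<in> tens d k"
    unfolding tens_def
  proof (intro CollectI allI impI)
    fix u assume "iota k m \<xi> (u, v) \<noteq> 0"
    hence "length u = k" "\<xi> (u @ v) \<noteq> 0" by (auto simp: iota_def split: if_splits)
    hence "u @ v \<in> words d (k + m)" "length u = k" using \<xi>t by (auto simp: tens_def)
    thus "u \<in> words d k" using words_split(1)[of "u @ v" d k m] by simp
  qed
  have o: "ip (words d k) \<eta> (\<lambda>u. iota k m \<xi> (u, v)) = 0" if \<eta>: "\<eta> \<in> Ksp d \<tau> k" for \<eta>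
  proof -
    have "ip (words d k) \<eta> (\<lambda>u. iota k m \<xi> (u, v)) = (\<Sum>u\<in>words d k. cnj (\<eta> u) * \<xi> (u @ v))"
      unfolding ip_def by (intro sum.cong refl) (auto simp: iota_def words_len)
    also have "\<dots> = 0"
    proof (cases "v \<in> words d m")
      case True
      have "(\<Sum>u\<in>words d k. cnj (\<eta> u) * \<xi> (u @ v)) = ip (words d (k + m)) (tprod k \<eta> (dl v)) \<xi>"
        using ip_tprod_dl_right[OF True] by simp
      also have "\<dots> = 0" using \<xi> Ksp_right[OF \<eta> True] by (auto simp: Esp_def)
      finally show ?thesis .
    next
      case False
      have "\<xi> (u @ v) = 0" if "u \<in> words d k" for u
      proof (rule tens_zero[OF \<xi>t])
        show "u @ v \<notin> words d (k + m)"
          using words_split(2)[of "u @ v" d k m] False that by (auto simp: words_len)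
      qed
      thus ?thesis by simp
    qed
    finally show ?thesis .
  qed
  show ?thesis using t o by (auto simp: Esp_def)
qed

lemma zero_Esp: "(\<lambda>x. 0) \<in> Esp d \<tau> m"
  by (auto simp: Esp_def tens_def ip_def)

lemma row_E:
  assumes \<xi>: "\<xi> \<in> Esp d \<tau> (k + m)"
  shows "(\<lambda>v. iota k m \<xi> (u, v)) \<in> Esp d \<tau> m"
proof (cases "length u = k")
  case False
  hence "(\<lambda>v. iota k m \<xi> (u, v)) = (\<lambda>x. 0)" by (auto simp: iota_def)
  thus ?thesis using zero_Esp by simp
next
  case lu: True
  have \<xi>t: "\<xi> \<in> tens d (k + m)" using \<xi> Esp_tens by blast
  have t: "(\<lambda>v. iota k m \<xi> (u, v)) \<in> tens d m"
    unfolding tens_def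
  proof (intro CollectI allI impI)
    fix v assume "iota k m \<xi> (u, v) \<noteq> 0"
    hence "\<xi> (u @ v) \<noteq> 0" by (auto simp: iota_def split: if_splits)
    hence "u @ v \<in> words d (k + m)" using \<xi>t by (auto simp: tens_def)
    thus "v \<in> words d m" using words_split(2)[of "u @ v" d k m] lu by simp
  qed
  have o: "ip (words d m) \<eta> (\<lambda>v. iota k m \<xi> (u, v)) = 0" if \<eta>: "\<eta> \<in> Ksp d \<tau> m" for \<eta>
  proof -
    have "ip (words d m) \<eta> (\<lambda>v. iota k m \<xi> (u, v)) = (\<Sum>v\<in>words d m. cnj (\<eta> v) * \<xi> (u @ v))"
      unfolding ip_def using lu by (simp add: iota_def)
    also have "\<dots> = 0"
    proof (cases "u \<in> words d k")
      case True
      have "(\<Sum>v\<in>words d m. cnj (\<eta> v) * \<xi> (u @ v)) = ip (words d (k + m)) (tprod k (dl u) \<eta>) \<xi>"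
        using ip_tprod_dl_left[OF True] by simp
      also have "\<dots> = 0" using \<xi> Ksp_left[OF \<eta> True] by (auto simp: Esp_def)
      finally show ?thesis .
    next
      case False
      have "\<xi> (u @ v) = 0" for v
      proof (rule tens_zero[OF \<xi>t])
        show "u @ v \<notin> words d (k + m)"
          using words_split(1)[of "u @ v" d k m] False lu by auto
      qed
      thus ?thesis by simp
    qed
    finally show ?thesis .
  qed
  show ?thesis using t o by (auto simp: Esp_def)
qed

lemma Esp_csub: "csubspace (Esp d \<tau> m)"
  unfolding csubspace_def
proof (intro conjI ballI allI)
  show "(\<lambda>x. 0) \<in> Esp d \<tau> m" by (rule zero_Esp)
next
  fix f g c assume f: "f \<in> Esp d \<tau> m" and g: "g \<in> Esp d \<tau> m"
  have "(\<lambda>x. c * f x + g x) \<in> tens d m"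
    using f g csub_lin[OF tens_csub] by (auto simp: Esp_def)
  moreover have "ip (words d m) \<eta> (\<lambda>x. c * f x + g x) = 0" if "\<eta> \<in> Ksp d \<tau> m" for \<eta>
  proof -
    have "ip (words d m) \<eta> (\<lambda>x. c * f x + g x) = c * ip (words d m) \<eta> f + ip (words d m) \<eta> g"
      by (simp add: ip_def sum.distrib sum_distrib_left algebra_simps)
    thus ?thesis using f g that by (simp add: Esp_def)
  qed
  ultimately show "(\<lambda>x. c * f x + g x) \<in> Esp d \<tau> m" by (simp add: Esp_def)
qed

lemma iota_htensor:
  assumes "\<xi> \<in> Esp d \<tau> (k + m)"
  shows "iota k m \<xi> \<in> htensor (Esp d \<tau> k) (Esp d \<tau> m)"
  by (rule tensor_split[OF finite_words Esp_csub Esp_csub])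
     (use assms Esp_tens tens_zero col_E row_E in blast)+

lemma adj2_adj2: "adj2 (adj2 g) = g" by (simp add: adj2_def vec_eq_iff)

lemma SU2_inv:
  assumes g: "g \<in> SU2"
  shows "adj2 g \<in> SU2" "g ** adj2 g = mat 1"
proof -
  have 1: "adj2 g ** g = mat 1" "det g = 1" using g by (auto simp: SU2_def)
  show 2: "g ** adj2 g = mat 1" using 1(1) matrix_left_right_inverse by blast
  have "det (adj2 g) * det g = 1" using det_mul[of "adj2 g" g] 1(1) by simp
  hence "det (adj2 g) = 1" using 1(2) by simp
  thus "adj2 g \<in> SU2" using 2 by (simp add: SU2_def adj2_adj2)
qed

lemma KG_inv:
  assumes U: "unitary_rep_SU2 d \<tau>" and g: "g \<in> SU2" and t: "t \<in> KG d \<tau> m"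
  shows "tensrep d \<tau> m g t \<in> KG d \<tau> m"
proof -
  obtain i a z b where i: "1 \<le> i" "i \<le> m - 1" and t: "t = tprod (i - 1) a (tprod 2 z b)"
    and a: "a \<in> tens d (i - 1)" and z: "z \<in> detsp d \<tau>" and b: "b \<in> tens d (m - i - 1)"
    using t by (auto simp: KG_def)
  have m: "m = (i - 1) + (2 + (m - i - 1))" using i by simp
  have zz: "tensrep d \<tau> 2 g z = z" using z g by (simp add: detsp_def)
  have "tensrep d \<tau> m g t = tensrep d \<tau> ((i - 1) + (2 + (m - i - 1))) g t" by (simp only: m[symmetric])
  also have "\<dots> = tprod (i - 1) (tensrep d \<tau> (i - 1) g a) (tprod 2 z (tensrep d \<tau> (m - i - 1) g b))"
    unfolding t tensrep_tprod zz ..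
  finally have eq: "tensrep d \<tau> m g t = tprod (i - 1) (tensrep d \<tau> (i - 1) g a) (tprod 2 z (tensrep d \<tau> (m - i - 1) g b))" .
  show ?thesis unfolding eq KG_def
  proof (rule UN_I[of i])
    show "i \<in> {1..m - 1}" using i by auto
    show "tprod (i - 1) (tensrep d \<tau> (i - 1) g a) (tprod 2 z (tensrep d \<tau> (m - i - 1) g b)) \<in> {tprod (i - 1) a (tprod 2 z b) | a z b.
         a \<in> tens d (i - 1) \<and> z \<in> detsp d \<tau> \<and> b \<in> tens d (m - i - 1)}"
      using z tensrep_tens by blast
  qed
qed

lemma Ksp_inv:
  assumes U: "unitary_rep_SU2 d \<tau>" and g: "g \<in> SU2" and \<eta>: "\<eta> \<in> Ksp d \<tau> m"
  shows "tensrep d \<tau> m g \<eta> \<in> Ksp d \<tau> m"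
  unfolding Ksp_KG
proof (rule cspan_image[OF cspan_csub, where \<Phi> = "tensrep d \<tau> m g"])
  show "\<forall>t\<in>KG d \<tau> m. tensrep d \<tau> m g t \<in> cspan (KG d \<tau> m)"
    using KG_inv[OF U g] cspan_base by blast
  show "\<eta> \<in> cspan (KG d \<tau> m)" using \<eta> by (simp add: Ksp_KG)
qed (rule tensrep_sum)

lemma Esp_inv:
  assumes U: "unitary_rep_SU2 d \<tau>" and g: "g \<in> SU2" and \<xi>: "\<xi> \<in> Esp d \<tau> m"
  shows "tensrep d \<tau> m g \<xi> \<in> Esp d \<tau> m"
proof -
  have "ip (words d m) \<eta> (tensrep d \<tau> m g \<xi>) = 0" if \<eta>: "\<eta> \<in> Ksp d \<tau> m" for \<eta>
  proof -
    define \<eta>' where "\<eta>' = tensrep d \<tau> m (adj2 g) \<eta>"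
    have \<eta>'K: "\<eta>' \<in> Ksp d \<tau> m" unfolding \<eta>'_def by (rule Ksp_inv[OF U SU2_inv(1)[OF g] \<eta>])
    have "tensrep d \<tau> m g \<eta>' = tensrep d \<tau> m (g ** adj2 g) \<eta>"
      unfolding \<eta>'_def by (rule tensrep_mult[OF U g SU2_inv(1)[OF g], symmetric])
    also have "\<dots> = \<eta>" unfolding SU2_inv(2)[OF g]
      by (rule tensrep_one[OF U]) (use \<eta> Ksp_tens in blast)
    finally have "ip (words d m) \<eta> (tensrep d \<tau> m g \<xi>) = ip (words d m) (tensrep d \<tau> m g \<eta>') (tensrep d \<tau> m g \<xi>)"
      by simp
    also have "\<dots> = ip (words d m) \<eta>' \<xi>" by (rule tensrep_unitary[OF U g])
    also have "\<dots> = 0" using \<xi> \<eta>'K by (simp add: Esp_def)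
    finally show ?thesis .
  qed
  thus ?thesis using tensrep_tens by (auto simp: Esp_def)
qed

lemma Esp_surj:
  assumes U: "unitary_rep_SU2 d \<tau>" and g: "g \<in> SU2"
  shows "tensrep d \<tau> m g ` Esp d \<tau> m = Esp d \<tau> m"
proof
  show "tensrep d \<tau> m g ` Esp d \<tau> m \<subseteq> Esp d \<tau> m" using Esp_inv[OF U g] by blast
  show "Esp d \<tau> m \<subseteq> tensrep d \<tau> m g ` Esp d \<tau> m"
  proof
    fix \<xi> assume \<xi>: "\<xi> \<in> Esp d \<tau> m"
    have "tensrep d \<tau> m g (tensrep d \<tau> m (adj2 g) \<xi>) = tensrep d \<tau> m (g ** adj2 g) \<xi>"
      by (rule tensrep_mult[OF U g SU2_inv(1)[OF g], symmetric])
    also have "\<dots> = \<xi>" unfolding SU2_inv(2)[OF g]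
      by (rule tensrep_one[OF U]) (use \<xi> Esp_tens in blast)
    finally show "\<xi> \<in> tensrep d \<tau> m g ` Esp d \<tau> m"
      using Esp_inv[OF U SU2_inv(1)[OF g] \<xi>] by (metis image_eqI)
  qed
qed

lemma tau_cont:
  assumes U: "unitary_rep_SU2 d \<tau>" and i: "i < d" and j: "j < d"
  shows "continuous_on SU2 (\<lambda>g. \<tau> g i j)"
proof -
  have cont: "continuous_on SU2 (\<lambda>g. \<Sum>j'<d. \<tau> g i j' * (\<lambda>x. if x = j then 1 else 0) j')"
  proof -
    have H: "\<And>\<xi> i. i < d \<Longrightarrow> continuous_on SU2 (\<lambda>g. \<Sum>j<d. \<tau> g i j * \<xi> j)"
      using U by (simp add: unitary_rep_SU2_def)
    show ?thesis by (rule H[OF i])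
  qed
  have eq: "(\<lambda>g. \<Sum>j'<d. \<tau> g i j' * (\<lambda>x. if x = j then 1 else 0) j') = (\<lambda>g. \<tau> g i j)"
    using j by (simp add: if_distrib cong: if_cong)
  from cont[unfolded eq] show ?thesis .
qed

lemma tensrep_cont:
  assumes U: "unitary_rep_SU2 d \<tau>"
  shows "continuous_on SU2 (\<lambda>g. tensrep d \<tau> m g \<xi> w)"
proof (cases "w \<in> words d m")
  case False thus ?thesis by (simp add: tensrep_def)
next
  case True
  have "continuous_on SU2 (\<lambda>g. \<Sum>v\<in>words d m. (\<Prod>i<m. \<tau> g (w ! i) (v ! i)) * \<xi> v)"
  proof (intro continuous_on_sum continuous_on_mult continuous_on_const continuous_on_prod)
    fix v i assume "v \<in> words d m" "i \<in> {..<m}"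
    thus "continuous_on SU2 (\<lambda>g. \<tau> g (w ! i) (v ! i))"
      using True by (intro tau_cont[OF U]) (auto intro: words_nth)
  qed
  thus ?thesis using True by (simp add: tensrep_def)
qed

lemma iota_equiv:
  "iota k m (tensrep d \<tau> (k + m) g \<xi>) = map_tensor (tensrep d \<tau> k g) (tensrep d \<tau> m g) (iota k m \<xi>)"
proof
  fix p :: "nat list \<times> nat list"
  obtain u v where p: "p = (u, v)" by (cases p)
  show "iota k m (tensrep d \<tau> (k + m) g \<xi>) p = map_tensor (tensrep d \<tau> k g) (tensrep d \<tau> m g) (iota k m \<xi>) p"
  proof (cases "u \<in> words d k \<and> v \<in> words d m")
    case False
    have L: "iota k m (tensrep d \<tau> (k + m) g \<xi>) (u, v) = 0"
    proof (cases "length u = k")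
      case True
      hence "u @ v \<notin> words d (k + m)" using False words_split[of "u @ v" d k m] by auto
      thus ?thesis using True by (simp add: iota_def tensrep_def)
    qed (simp add: iota_def)
    have R: "map_tensor (tensrep d \<tau> k g) (tensrep d \<tau> m g) (iota k m \<xi>) (u, v) = 0"
    proof (cases "u \<in> words d k")
      case True
      hence "v \<notin> words d m" using False by blast
      thus ?thesis by (simp add: map_tensor_def tensrep_def)
    qed (simp add: map_tensor_def tensrep_def)
    show ?thesis using L R p by simp
  next
    case True
    hence u: "u \<in> words d k" and v: "v \<in> words d m" by auto
    have lu: "length u = k" using u by (rule words_len)
    have uv: "u @ v \<in> words d (k + m)" using u v by (rule append_words)
    have "iota k m (tensrep d \<tau> (k + m) g \<xi>) (u, v)
        = (\<Sum>x\<in>words d (k + m). (\<Prod>i<k + m. \<tau> g ((u @ v) ! i) (x ! i)) * \<xi> x)"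
      using lu uv by (simp add: iota_def tensrep_def)
    also have "\<dots> = (\<Sum>u'\<in>words d k. \<Sum>v'\<in>words d m. (\<Prod>i<k + m. \<tau> g ((u @ v) ! i) ((u' @ v') ! i)) * \<xi> (u' @ v'))"
      by (rule sum_words_append)
    also have "\<dots> = (\<Sum>u'\<in>words d k. (\<Prod>i<k. \<tau> g (u ! i) (u' ! i)) *
        (\<Sum>v'\<in>words d m. (\<Prod>i<m. \<tau> g (v ! i) (v' ! i)) * iota k m \<xi> (u', v')))"
      using lu by (intro sum.cong refl)
        (auto simp: sum_distrib_left prod_append_split words_len iota_def mult_ac intro!: sum.cong)
    also have "\<dots> = map_tensor (tensrep d \<tau> k g) (tensrep d \<tau> m g) (iota k m \<xi>) (u, v)"
      using u v by (simp add: map_tensor_def tensrep_def)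
    finally show ?thesis using p by simp
  qed
qed

lemma iota_isometry:
  "ip (words d k \<times> words d m) (iota k m \<xi>) (iota k m \<eta>) = ip (words d (k + m)) \<xi> \<eta>"
proof -
  have "ip (words d k \<times> words d m) (iota k m \<xi>) (iota k m \<eta>)
      = (\<Sum>u\<in>words d k. \<Sum>v\<in>words d m. cnj (iota k m \<xi> (u, v)) * iota k m \<eta> (u, v))"
    unfolding ip_def by (simp add: sum.cartesian_product)
  also have "\<dots> = (\<Sum>u\<in>words d k. \<Sum>v\<in>words d m. cnj (\<xi> (u @ v)) * \<eta> (u @ v))"
    by (intro sum.cong refl) (auto simp: iota_def words_len)
  also have "\<dots> = ip (words d (k + m)) \<xi> \<eta>"
    unfolding ip_def by (rule sum_words_append[symmetric])
  finally show ?thesis .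
qed

lemma Ksp0: "\<eta> \<in> Ksp d \<tau> 0 \<Longrightarrow> \<eta> = (\<lambda>x. 0)"
  by (auto simp: Ksp_def cspan_def)

lemma words0: "words d 0 = {[]}" by (auto simp: words_def)

lemma Esp0: "Esp d \<tau> 0 = {(\<lambda>w. if w = [] then c else 0) | c. True}"
proof
  show "Esp d \<tau> 0 \<subseteq> {(\<lambda>w. if w = [] then c else 0) | c. True}"
  proof
    fix \<xi> assume "\<xi> \<in> Esp d \<tau> 0"
    hence "\<xi> \<in> tens d 0" by (simp add: Esp_def)
    hence "\<xi> = (\<lambda>w. if w = [] then \<xi> [] else 0)" by (intro ext) (auto simp: tens_def words0)
    thus "\<xi> \<in> {(\<lambda>w. if w = [] then c else 0) | c. True}" by blast
  qed
  show "{(\<lambda>w. if w = [] then c else 0) | c. True} \<subseteq> Esp d \<tau> 0"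
    by (auto simp: Esp_def tens_def words0 ip_def split: if_splits dest!: Ksp0)
qed

lemma tensrep0: "\<xi> \<in> tens d 0 \<Longrightarrow> tensrep d \<tau> 0 g \<xi> = \<xi>"
  by (intro ext) (auto simp: tensrep_def words0 tens_def)

theorem proposition2p3:
  fixes d :: nat and \<tau> :: "complex^2^2 \<Rightarrow> nat \<Rightarrow> nat \<Rightarrow> complex"
  assumes "unitary_rep_SU2 d \<tau>"
  shows "SU2_subproduct_system d (Esp d \<tau>) iota (tensrep d \<tau>)"
  unfolding SU2_subproduct_system_def
proof (intro conjI allI ballI)
  note U = assms
  show "csubspace (Esp d \<tau> m)" for m by (rule Esp_csub)
  show "Esp d \<tau> m \<subseteq> tens d m" for m by (rule Esp_tens)
  show "Esp d \<tau> 0 = {(\<lambda>w. if w = [] then c else 0) | c. True}" by (rule Esp0)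
  show "clinear_on (Esp d \<tau> (k + m)) (iota k m)" for k m
    by (auto simp: clinear_on_def iota_def)
  show "iota k m \<xi> \<in> htensor (Esp d \<tau> k) (Esp d \<tau> m)" if "\<xi> \<in> Esp d \<tau> (k + m)" for k m \<xi>
    using that by (rule iota_htensor)
  show "ip (words d k \<times> words d m) (iota k m \<xi>) (iota k m \<eta>) = ip (words d (k + m)) \<xi> \<eta>" for k m \<xi> \<eta>
    by (rule iota_isometry)
  show "iota 0 m \<xi> = (\<lambda>(u, v). if u = [] then \<xi> v else 0)" for m \<xi>
    by (auto simp: iota_def)
  show "iota m 0 \<xi> = (\<lambda>(u, v). if v = [] then \<xi> u else 0)" if "\<xi> \<in> Esp d \<tau> m" for m \<xi>
  proof -
    have t: "\<xi> \<in> tens d m" using that Esp_tens by blast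
    show ?thesis
    proof (intro ext, clarify)
      fix u v :: "nat list"
      show "iota m 0 \<xi> (u, v) = (if v = [] then \<xi> u else 0)"
      proof (cases "v = []")
        case True thus ?thesis using t by (auto simp: iota_def tens_def words_def)
      next
        case False
        hence "length u = m \<Longrightarrow> u @ v \<notin> words d m" by (auto simp: words_def)
        thus ?thesis using t False by (auto simp: iota_def tens_def)
      qed
    qed
  qed
  show "id_tensor (iota l m) (iota k (l + m) \<xi>) (u, v, w) = tensor_id (iota k l) (iota (k + l) m \<xi>) ((u, v), w)"
    for k l m \<xi> u v w
    by (simp add: id_tensor_def tensor_id_def iota_def)
  show "clinear_on (Esp d \<tau> m) (tensrep d \<tau> m g)" for m g
    by (simp add: clinear_on_def tensrep_lin)
  show "tensrep d \<tau> m g ` Esp d \<tau> m = Esp d \<tau> m" if "g \<in> SU2" for m g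
    by (rule Esp_surj[OF U that])
  show "ip (words d m) (tensrep d \<tau> m g \<xi>) (tensrep d \<tau> m g \<eta>) = ip (words d m) \<xi> \<eta>"
    if "g \<in> SU2" for m g \<xi> \<eta>
    by (rule tensrep_unitary[OF U that])
  show "tensrep d \<tau> m (g ** h) \<xi> = tensrep d \<tau> m g (tensrep d \<tau> m h \<xi>)"
    if "g \<in> SU2" "h \<in> SU2" for m g h \<xi>
    by (rule tensrep_mult[OF U that])
  show "tensrep d \<tau> m (mat 1) \<xi> = \<xi>" if "\<xi> \<in> Esp d \<tau> m" for m \<xi>
    using that Esp_tens by (intro tensrep_one[OF U]) blast
  show "continuous_on SU2 (\<lambda>g. tensrep d \<tau> m g \<xi> w)" for m \<xi> w
    by (rule tensrep_cont[OF U])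
  show "tensrep d \<tau> 0 g \<xi> = \<xi>" if "\<xi> \<in> Esp d \<tau> 0" for g \<xi>
    using that Esp_tens by (intro tensrep0) blast
  show "iota k m (tensrep d \<tau> (k + m) g \<xi>) = map_tensor (tensrep d \<tau> k g) (tensrep d \<tau> m g) (iota k m \<xi>)"
    for k m g \<xi>
    by (rule iota_equiv)
qed

end
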